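(* Let $\psi^\infty:[0,\infty)\to X$ be a bounded, differentiable solution of the conventional adjoint equation $$\frac{d\psi^\infty}{dt} + f_u^*(t)\,\psi^\infty + J_u(t) = 0,$$ which moreover satisfies $\lim_{T\to\infty}\frac{1}{T}\int_0^T \psi^\infty(t)^T f(t)\,dt = 0$. Then $$\psi^\infty(t)^T f(t) = \bar J - J(t)\qquad\text{for all } t\ge 0 .$$
   Context: Let $X=\mathbb{R}^n$ with inner product $x^Ty$. Let $f:X\times\mathbb{R}\to X$ be $C^2$, fix the parameter $s\in\mathbb{R}$, and let $u(t)$, $t\ge 0$, solve $\frac{du}{dt}=f(u,s)$. Write $f(t)=f(u(t),s)$, let $f_u(t)$ be the Jacobian $\partial f/\partial u$ at $(u(t),s)$, and let $f_u^*(t)=f_u(t)^T$. Let $J:X\times\mathbb{R}\to\mathbb{R}$ be smooth, with $J(t)=J(u(t),s)$ and $J_u(t)$ the gradient of $J$ with respect to $u$ at $(u(t),s)$, written as a column vector. Let $\bar J=\lim_{T\to\infty}\frac1T\int_0^T J(t)\,dt$, assumed to exist. *)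

theory Defs
  imports "HOL-Analysis.Analysis"
begin

fun dderiv :: "('a::real_normed_vector \<Rightarrow> 'b::real_normed_vector) \<Rightarrow> 'a list \<Rightarrow> 'a \<Rightarrow> 'b" where
  "dderiv g [] = g"
| "dderiv g (v # vs) = (\<lambda>x. frechet_derivative (dderiv g vs) (at x) v)"

definition Ck :: "nat \<Rightarrow> ('a::real_normed_vector \<Rightarrow> 'b::real_normed_vector) \<Rightarrow> bool" where
  "Ck k g \<longleftrightarrow> (\<forall>vs. length vs < k \<longrightarrow> (\<forall>x. dderiv g vs differentiable (at x)))
             \<and> (\<forall>vs. length vs \<le> k \<longrightarrow> continuous_on UNIV (dderiv g vs))"

definition smooth_map :: "('a::real_normed_vector \<Rightarrow> 'b::real_normed_vector) \<Rightarrow> bool" where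
  "smooth_map g \<longleftrightarrow> (\<forall>k. Ck k g)"

definition gradient :: "(real^'n \<Rightarrow> real) \<Rightarrow> real^'n \<Rightarrow> real^'n" where
  "gradient g x = (\<chi> i. frechet_derivative g (at x) (axis i 1))"

end

theory Submission
  imports Defs
begin
lemma grad_lin:
  fixes D :: "real^'n \<Rightarrow> real"
  assumes "linear D"
  shows "(\<chi> i. D (axis i 1)) \<bullet> w = D w"
proof -
  have "D w = D (\<Sum>i\<in>UNIV. w$i *\<^sub>R axis i 1)"
    by (metis (no_types, lifting) sum.cong basis_expansion scalar_mult_eq_scaleR)
  also have "\<dots> = (\<Sum>i\<in>UNIV. w$i * D (axis i 1))"
    using assms by (simp add: linear_sum linear_scale)
  finally show ?thesis by (simp add: inner_vec_def mult.commute)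
qed

lemma slice_diff:
  fixes G :: "('a::real_normed_vector) \<times> real \<Rightarrow> 'b::real_normed_vector"
  assumes "\<And>x. G differentiable (at x)"
  shows "(\<lambda>v. G (v, s)) differentiable (at v)"
proof -
  have "((\<lambda>v. (v, s)) has_derivative (\<lambda>h. (h, 0))) (at v)"
    by (auto intro!: derivative_eq_intros)
  then have "(\<lambda>v. (v, s)) differentiable (at v)" by (auto simp: differentiable_def)
  then show ?thesis using assms differentiable_chain_at[of "\<lambda>v. (v, s)" v G]
    by (auto simp: o_def)
qed

lemma chain_vec:
  assumes "(u has_vector_derivative w) (at t within S)"
    and "(g has_derivative D) (at (u t))"
  shows "((\<lambda>t. g (u t)) has_vector_derivative D w) (at t within S)"
proof -
  have lin: "linear D" using assms(2) has_derivative_linear by blast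
  have "((g \<circ> u) has_derivative (D \<circ> (\<lambda>h. h *\<^sub>R w))) (at t within S)"
    using assms unfolding has_vector_derivative_def
    by (meson diff_chain_within has_derivative_at_withinI)
  moreover have "(D \<circ> (\<lambda>h. h *\<^sub>R w)) = (\<lambda>h. h *\<^sub>R D w)"
    using lin by (auto simp: o_def linear_scale)
  ultimately show ?thesis by (simp add: has_vector_derivative_def o_def)
qed

theorem mainTheorem1:
  fixes F :: "(real^'n) \<times> real \<Rightarrow> real^'n"
    and J :: "(real^'n) \<times> real \<Rightarrow> real"
    and s :: real
    and u :: "real \<Rightarrow> real^'n"
    and Jbar :: real
    and \<psi> \<psi>' :: "real \<Rightarrow> real^'n"
  assumes F_C2: "Ck 2 F"
    and J_smooth: "smooth_map J"
    and u_ode: "\<And>t. t \<ge> 0 \<Longrightarrow> (u has_vector_derivative F (u t, s)) (at t within {0..})"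
    and Jbar_lim: "((\<lambda>T. (1 / T) * integral {0..T} (\<lambda>t. J (u t, s))) \<longlongrightarrow> Jbar) at_top"
    and \<psi>_bounded: "bounded (\<psi> ` {0..})"
    and \<psi>_deriv: "\<And>t. t \<ge> 0 \<Longrightarrow> (\<psi> has_vector_derivative \<psi>' t) (at t within {0..})"
    and \<psi>_adjoint: "\<And>t. t \<ge> 0 \<Longrightarrow>
        \<psi>' t + transpose (jacobian (\<lambda>v. F (v, s)) (at (u t))) *v \<psi> t
             + gradient (\<lambda>v. J (v, s)) (u t) = 0"
    and \<psi>_avg: "((\<lambda>T. (1 / T) * integral {0..T} (\<lambda>t. \<psi> t \<bullet> F (u t, s))) \<longlongrightarrow> 0) at_top"
  shows "\<forall>t\<ge>0. \<psi> t \<bullet> F (u t, s) = Jbar - J (u t, s)"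
proof -
  define Fs where "Fs = (\<lambda>v. F (v, s))"
  define Js where "Js = (\<lambda>v. J (v, s))"
  define A where "A t = jacobian Fs (at (u t))" for t
  define DJ where "DJ t = frechet_derivative Js (at (u t))" for t
  have Fd: "F differentiable (at x)" for x
    using F_C2 unfolding Ck_def by (metis dderiv.simps(1) list.size(3) zero_less_numeral)
  have Jd: "J differentiable (at x)" for x
    using J_smooth unfolding smooth_map_def Ck_def
    by (metis dderiv.simps(1) list.size(3) zero_less_one)
  have Fsd: "(Fs has_derivative (\<lambda>h. A t *v h)) (at (u t))" for t
    unfolding A_def Fs_def using jacobian_works slice_diff[OF Fd] by blast
  have Jsd: "(Js has_derivative DJ t) (at (u t))" for t
    unfolding DJ_def Js_def using frechet_derivative_works slice_diff[OF Jd] by blast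
  have linDJ: "linear (DJ t)" for t using Jsd has_derivative_linear by blast
  have dF: "((\<lambda>t. Fs (u t)) has_vector_derivative A t *v Fs (u t)) (at t within {0..})"
    if "t \<ge> 0" for t
    using chain_vec[OF u_ode[OF that] Fsd] by (simp add: Fs_def)
  have dJ: "((\<lambda>t. Js (u t)) has_vector_derivative DJ t (Fs (u t))) (at t within {0..})"
    if "t \<ge> 0" for t
    using chain_vec[OF u_ode[OF that] Jsd] by (simp add: Fs_def)
  define h where "h t = \<psi> t \<bullet> Fs (u t) + Js (u t)" for t
  have dh: "(h has_field_derivative 0) (at t within {0..})" if "t \<ge> 0" for t
  proof -
    have "(h has_vector_derivative
        (\<psi> t \<bullet> (A t *v Fs (u t)) + \<psi>' t \<bullet> Fs (u t) + DJ t (Fs (u t)))) (at t within {0..})"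
      unfolding h_def
      by (rule has_vector_derivative_add[OF bounded_bilinear.has_vector_derivative[OF bounded_bilinear_inner \<psi>_deriv[OF that] dF[OF that]] dJ[OF that]])
    moreover have "\<psi> t \<bullet> (A t *v Fs (u t)) + \<psi>' t \<bullet> Fs (u t) + DJ t (Fs (u t)) = 0"
    proof -
      let ?X = "transpose (A t) *v \<psi> t" and ?Y = "gradient Js (u t)"
      have e: "\<psi>' t + ?X + ?Y = 0"
        using \<psi>_adjoint[OF that] unfolding A_def Fs_def Js_def .
      have "\<psi>' t = (\<psi>' t + ?X + ?Y) - ?X - ?Y" by simp
      also have "\<dots> = - ?X - ?Y" using e by simp
      finally have p: "\<psi>' t = - ?X - ?Y" .
      have g: "?Y \<bullet> w = DJ t w" for w
      proof -
        have "?Y = (\<chi> i. DJ t (axis i 1))" by (simp add: gradient_def DJ_def)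
        then show ?thesis using grad_lin[OF linDJ] by simp
      qed
      have tr: "?X \<bullet> w = \<psi> t \<bullet> (A t *v w)" for w
      proof -
        have "?X = \<psi> t v* A t" using vector_transpose_matrix[of "\<psi> t" "transpose (A t)"] by simp
        then show ?thesis by (simp add: dot_lmul_matrix)
      qed
      show ?thesis unfolding p inner_diff_left inner_minus_left g tr by simp
    qed
    ultimately show ?thesis
      by (simp add: has_real_derivative_iff_has_vector_derivative)
  qed
  obtain c where hc: "\<And>t. t \<in> {0..} \<Longrightarrow> h t = c"
    using has_field_derivative_zero_constant[of "{0::real..}" h] dh by fastforce
  have hc': "\<psi> t \<bullet> F (u t, s) + J (u t, s) = c" if "t \<ge> 0" for t
    using hc[of t] that by (simp add: h_def Fs_def Js_def)
  have contg: "continuous_on {0..T} (\<lambda>t. \<psi> t \<bullet> F (u t, s))" for T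
  proof -
    have "continuous_on {0..} (\<lambda>t. \<psi> t \<bullet> Fs (u t))"
      using bounded_bilinear.has_vector_derivative[OF bounded_bilinear_inner \<psi>_deriv dF]
      by (meson atLeast_iff continuous_on_eq_continuous_within has_vector_derivative_continuous)
    then show ?thesis unfolding Fs_def by (rule continuous_on_subset) auto
  qed
  have contJ: "continuous_on {0..T} (\<lambda>t. J (u t, s))" for T
  proof -
    have "continuous_on {0..} (\<lambda>t. Js (u t))"
      using dJ
      by (meson atLeast_iff continuous_on_eq_continuous_within has_vector_derivative_continuous)
    then show ?thesis unfolding Js_def by (rule continuous_on_subset) auto
  qed
  have ev: "\<forall>\<^sub>F T in at_top. (1 / T) * integral {0..T} (\<lambda>t. \<psi> t \<bullet> F (u t, s))
      + (1 / T) * integral {0..T} (\<lambda>t. J (u t, s)) = c"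
    using eventually_gt_at_top[of "0::real"]
  proof eventually_elim
    case (elim T)
    have "integral {0..T} (\<lambda>t. \<psi> t \<bullet> F (u t, s)) + integral {0..T} (\<lambda>t. J (u t, s))
        = integral {0..T} (\<lambda>t. \<psi> t \<bullet> F (u t, s) + J (u t, s))"
      by (rule integral_add[symmetric]) (auto intro!: integrable_continuous_interval contg contJ)
    also have "\<dots> = integral {0..T} (\<lambda>t. c)"
      by (rule integral_cong) (use hc' in auto)
    also have "\<dots> = T * c" using elim by simp
    finally show ?case using elim by (simp add: field_simps)
  qed
  have "((\<lambda>T. (1 / T) * integral {0..T} (\<lambda>t. \<psi> t \<bullet> F (u t, s))
      + (1 / T) * integral {0..T} (\<lambda>t. J (u t, s))) \<longlongrightarrow> 0 + Jbar) at_top"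
    by (rule tendsto_add[OF \<psi>_avg Jbar_lim])
  from this ev have "((\<lambda>T::real. c) \<longlongrightarrow> 0 + Jbar) at_top"
    by (rule Lim_transform_eventually)
  then have "((\<lambda>T::real. c) \<longlongrightarrow> Jbar) at_top" by simp
  then have "c = Jbar" using tendsto_const_iff by (metis trivial_limit_at_top_linorder)
  then show ?thesis using hc' by (auto simp: algebra_simps)
qed
end
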